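(* Let $n\geq 2$ and fix indices $1\leq k\neq l\leq n$. Then $\mathrm{Aut}(W_n)$ is generated by the set $Y=\{\sigma_{kl}\}\cup\{\alpha_{(i,i+1)}\mid i=1,\dots,n-1\}$.
   Context: $W_n=\langle s_1,\dots,s_n\mid s_1^2,\dots,s_n^2\rangle$. For $1\leq i\neq j\leq n$ the partial conjugation $\sigma_{ij}\in\mathrm{Aut}(W_n)$ is defined by $\sigma_{ij}(s_j)=s_is_js_i$ and $\sigma_{ij}(s_k)=s_k$ for $k\neq j$. For $\pi\in\mathrm{Sym}(n)$, the permutation automorphism $\alpha_\pi$ is defined by $\alpha_\pi(s_k)=s_{\pi(k)}$; $(i,i+1)$ denotes a transposition. *)

theory Defs
  imports "HOL-Algebra.Algebra" "HOL-Combinatorics.Transposition"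
begin

text \<open>Normal forms in the right-angled Coxeter group W_n = free product of n copies
of Z/2 generated by s_1..s_n: words over letters 1..n with no two equal adjacent letters.
The word [i] represents s_i.\<close>

fun red :: "nat list \<Rightarrow> nat list" where
  "red [] = []"
| "red (x # xs) = (case red xs of [] \<Rightarrow> [x] | y # ys \<Rightarrow> (if x = y then ys else x # y # ys))"

definition W :: "nat \<Rightarrow> nat list monoid" where
  "W n = \<lparr>carrier = {w. set w \<subseteq> {1..n} \<and> successively (\<lambda>a b. a \<noteq> b) w},
          monoid.mult = (\<lambda>u v. red (u @ v)),
          one = []\<rparr>"

definition ext_hom :: "(nat \<Rightarrow> nat list) \<Rightarrow> nat list \<Rightarrow> nat list" where
  "ext_hom f w = red (concat (map f w))"

definition sigma :: "nat \<Rightarrow> nat \<Rightarrow> nat \<Rightarrow> (nat list \<Rightarrow> nat list)" where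
  "sigma n i j = (\<lambda>w \<in> carrier (W n). ext_hom (\<lambda>x. if x = j then [i, j, i] else [x]) w)"

definition alpha :: "nat \<Rightarrow> (nat \<Rightarrow> nat) \<Rightarrow> (nat list \<Rightarrow> nat list)" where
  "alpha n p = (\<lambda>w \<in> carrier (W n). ext_hom (\<lambda>x. [p x]) w)"

end

theory Submission
  imports Defs "HOL-Combinatorics.Permutations"
begin


abbreviation rd :: "nat list \<Rightarrow> bool" where "rd w \<equiv> successively (\<lambda>a b. a \<noteq> b) w"

definition stp :: "nat \<Rightarrow> nat list \<Rightarrow> nat list" where
 "stp x r = (case r of [] \<Rightarrow> [x] | y # ys \<Rightarrow> (if x = y then ys else x # y # ys))"

lemma red_Cons: "red (x # xs) = stp x (red xs)" by (simp add: stp_def)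
declare red.simps(2)[simp del]

lemma stp_rd: "rd r \<Longrightarrow> rd (stp x r)"
  by (cases r) (auto simp: stp_def successively_Cons)

lemma red_rd: "rd (red w)"
  by (induct w) (auto simp: red_Cons stp_rd)

lemma set_stp: "set (stp x r) \<subseteq> insert x (set r)"
  by (cases r) (auto simp: stp_def)

lemma set_red: "set (red w) \<subseteq> set w"
  by (induct w) (use set_stp in \<open>fastforce simp: red_Cons\<close>)+

lemma red_id: "rd w \<Longrightarrow> red w = w"
  by (induct w) (auto simp: red_Cons stp_def successively_Cons split: list.splits)

lemma stp_stp: "rd z \<Longrightarrow> stp x (stp x z) = z"
  by (cases z) (auto simp: stp_def successively_Cons split: list.splits)

lemma red_append_right: "red (xs @ ys) = red (xs @ red ys)"
  by (induct xs) (auto simp: red_Cons red_id red_rd)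

lemma red_stp_app: "rd r \<Longrightarrow> red (stp x r @ ys) = stp x (red (r @ ys))"
proof (cases r)
  case Nil then show ?thesis by (simp add: stp_def red_Cons)
next
  case (Cons y rs)
  assume "rd r"
  show ?thesis
  proof (cases "x = y")
    case True
    have "stp x r = rs" using Cons True by (simp add: stp_def)
    moreover have "red (r @ ys) = stp x (red (rs @ ys))" using Cons True by (simp add: red_Cons)
    ultimately show ?thesis by (simp add: stp_stp red_rd)
  next
    case False
    then show ?thesis using Cons by (simp add: stp_def red_Cons)
  qed
qed

lemma red_append_left: "red (xs @ ys) = red (red xs @ ys)"
  by (induct xs) (auto simp: red_Cons red_stp_app red_rd)

lemma red_append: "red (xs @ ys) = red (red xs @ red ys)"
  by (metis red_append_left red_append_right)

lemma red_rev: "red (u @ rev u) = []"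
proof (induct u)
  case Nil then show ?case by simp
next
  case (Cons x xs)
  have "red ((x # xs) @ rev (x # xs)) = red (red (x # xs @ rev xs) @ [x])"
    using red_append_left[of "x # xs @ rev xs" "[x]"] by simp
  also have "red (x # xs @ rev xs) = [x]" using Cons by (simp add: red_Cons stp_def)
  finally show ?case by (simp add: red_Cons stp_def)
qed

lemma red_rev': "red (rev u @ u) = []"
  using red_rev[of "rev u"] by simp

lemma red_cancel: "red (xs @ rev p @ p @ ys) = red (xs @ ys)"
proof -
  have "red (rev p @ p @ ys) = red ys"
    using red_append_left[of "rev p @ p" ys] by (simp add: red_rev')
  then show ?thesis by (metis red_append_right)
qed

lemma red_cancel1: "red (xs @ [a, a] @ ys) = red (xs @ ys)"
  using red_cancel[of xs "[a]"] by simp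

lemma red_nil: "red [] = []" by simp

lemma length_stp: "length (stp x r) \<le> Suc (length r)"
  by (cases r) (auto simp: stp_def)

lemma length_red: "length (red w) \<le> length w"
  by (induct w) (auto simp: red_Cons intro: order_trans[OF length_stp])

declare successively_rev[simp del]
lemma rd_rev[simp]: "rd (rev u) = rd u"
  unfolding successively_rev by (rule successively_cong) auto

lemma red_inv_unique: "rd u \<Longrightarrow> rd v \<Longrightarrow> red (u @ v) = [] \<Longrightarrow> v = rev u"
proof -
  assume u: "rd u" and v: "rd v" and e: "red (u @ v) = []"
  have "red (rev u @ u @ v) = red v"
    using red_append_left[of "rev u @ u" v] by (simp add: red_rev')
  moreover have "red (rev u @ u @ v) = red (rev u)"
    using red_append_right[of "rev u" "u @ v"] e by simp
  ultimately show ?thesis using u v by (simp add: red_id rd_rev)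
qed

lemma W_carrier: "carrier (W n) = {w. set w \<subseteq> {1..n} \<and> rd w}" by (simp add: W_def)
lemma W_mult: "x \<otimes>\<^bsub>W n\<^esub> y = red (x @ y)" by (simp add: W_def)
lemma W_one: "\<one>\<^bsub>W n\<^esub> = []" by (simp add: W_def)

lemma red_in_carrier: "set w \<subseteq> {1..n} \<Longrightarrow> red w \<in> carrier (W n)"
  using set_red[of w] red_rd[of w] by (auto simp: W_carrier)

lemma group_W: "group (W n)"
proof (rule groupI)
  fix x y assume "x \<in> carrier (W n)" "y \<in> carrier (W n)"
  then show "x \<otimes>\<^bsub>W n\<^esub> y \<in> carrier (W n)"
  proof -
    have "set (x @ y) \<subseteq> {1..n}" using \<open>x \<in> carrier (W n)\<close> \<open>y \<in> carrier (W n)\<close> by (auto simp: W_carrier)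
    then show ?thesis unfolding W_mult by (rule red_in_carrier)
  qed
next
  show "\<one>\<^bsub>W n\<^esub> \<in> carrier (W n)" by (simp add: W_one W_carrier)
next
  fix x y z assume "x \<in> carrier (W n)" "y \<in> carrier (W n)" "z \<in> carrier (W n)"
  show "x \<otimes>\<^bsub>W n\<^esub> y \<otimes>\<^bsub>W n\<^esub> z = x \<otimes>\<^bsub>W n\<^esub> (y \<otimes>\<^bsub>W n\<^esub> z)"
    by (simp add: W_mult) (metis append_assoc red_append_left red_append_right)
next
  fix x assume "x \<in> carrier (W n)"
  then show "\<one>\<^bsub>W n\<^esub> \<otimes>\<^bsub>W n\<^esub> x = x" by (simp add: W_mult W_one W_carrier red_id)
next
  fix x assume "x \<in> carrier (W n)"
  then show "\<exists>y\<in>carrier (W n). y \<otimes>\<^bsub>W n\<^esub> x = \<one>\<^bsub>W n\<^esub>"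
    by (intro bexI[of _ "rev x"]) (auto simp: W_mult W_one W_carrier red_rev')
qed



lemma red_concat_stp:
  assumes "red (f x @ f x) = []"
  shows "red (concat (map f (stp x r))) = red (f x @ concat (map f r))"
proof (cases r)
  case Nil then show ?thesis by (simp add: stp_def)
next
  case (Cons y ys)
  show ?thesis
  proof (cases "x = y")
    case True
    have "red (f x @ f x @ concat (map f ys)) = red (red (f x @ f x) @ concat (map f ys))"
      using red_append_left[of "f x @ f x"] by simp
    then show ?thesis using Cons True assms by (simp add: stp_def)
  next
    case False then show ?thesis using Cons by (simp add: stp_def)
  qed
qed

lemma red_concat_red:
  assumes "\<forall>x\<in>set w. red (f x @ f x) = []"
  shows "red (concat (map f (red w))) = red (concat (map f w))"
  using assms
proof (induct w)
  case Nil then show ?case by simp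
next
  case (Cons x xs)
  have "red (concat (map f (red (x # xs)))) = red (f x @ concat (map f (red xs)))"
    using Cons.prems by (simp add: red_Cons red_concat_stp)
  also have "\<dots> = red (f x @ red (concat (map f (red xs))))" by (rule red_append_right)
  also have "\<dots> = red (f x @ red (concat (map f xs)))" using Cons by simp
  also have "\<dots> = red (concat (map f (x # xs)))" using red_append_right[of "f x"] by simp
  finally show ?case .
qed

lemma red_concat_map_red: "red (concat (map f w)) = red (concat (map (\<lambda>x. red (f x)) w))"
proof (induct w)
  case Nil then show ?case by simp
next
  case (Cons x xs)
  have "red (concat (map f (x # xs))) = red (red (f x) @ red (concat (map f xs)))"
    using red_append by simp
  also have "\<dots> = red (red (red (f x)) @ red (concat (map (\<lambda>x. red (f x)) xs)))"
    using Cons by (simp add: red_id red_rd)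
  also have "\<dots> = red (concat (map (\<lambda>x. red (f x)) (x # xs)))"
    using red_append[of "red (f x)"] by simp
  finally show ?case .
qed

lemma ext_hom_comp:
  assumes "\<forall>x\<in>set (concat (map g w)). red (f x @ f x) = []"
  shows "ext_hom f (ext_hom g w) = ext_hom (\<lambda>x. ext_hom f (g x)) w"
proof -
  have "ext_hom f (ext_hom g w) = red (concat (map f (concat (map g w))))"
    unfolding ext_hom_def using red_concat_red[OF assms] by simp
  also have "concat (map f (concat (map g w))) = concat (map (\<lambda>x. concat (map f (g x))) w)"
    by (induct w) auto
  also have "red \<dots> = ext_hom (\<lambda>x. ext_hom f (g x)) w"
    unfolding ext_hom_def by (rule red_concat_map_red)
  finally show ?thesis .
qed

lemma ext_hom_letter: "ext_hom f [x] = red (f x)"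
  by (simp add: ext_hom_def)

lemma ext_hom_id: "rd w \<Longrightarrow> ext_hom (\<lambda>x. [x]) w = w"
proof -
  assume "rd w"
  have "concat (map (\<lambda>x. [x]) w) = w" by (induct w) auto
  then show ?thesis using \<open>rd w\<close> by (simp add: ext_hom_def red_id)
qed

definition good :: "nat \<Rightarrow> (nat \<Rightarrow> nat list) \<Rightarrow> bool" where
  "good n f \<longleftrightarrow> (\<forall>x\<in>{1..n}. set (f x) \<subseteq> {1..n} \<and> red (f x @ f x) = [])"

lemma ext_hom_carrier:
  assumes "good n f" "w \<in> carrier (W n)"
  shows "ext_hom f w \<in> carrier (W n)"
  unfolding ext_hom_def
proof (rule red_in_carrier)
  show "set (concat (map f w)) \<subseteq> {1..n}"
    using assms by (auto simp: good_def W_carrier)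
qed

lemma ext_hom_hom:
  assumes "good n f"
  shows "(\<lambda>w\<in>carrier (W n). ext_hom f w) \<in> hom (W n) (W n)"
proof (rule homI)
  fix x assume "x \<in> carrier (W n)"
  then show "(\<lambda>w\<in>carrier (W n). ext_hom f w) x \<in> carrier (W n)"
    using ext_hom_carrier[OF assms] by simp
next
  fix x y assume x: "x \<in> carrier (W n)" and y: "y \<in> carrier (W n)"
  have xy: "x \<otimes>\<^bsub>W n\<^esub> y \<in> carrier (W n)" using x y group.subgroupE(4) group_W
    by (metis monoid.m_closed group.is_monoid)
  have inv: "\<forall>z\<in>set (x @ y). red (f z @ f z) = []"
    using x y assms by (auto simp: good_def W_carrier)
  have "ext_hom f (red (x @ y)) = red (concat (map f x) @ concat (map f y))"
    unfolding ext_hom_def using red_concat_red[OF inv] by simp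
  also have "\<dots> = red (ext_hom f x @ ext_hom f y)"
    unfolding ext_hom_def by (rule red_append)
  finally show "(\<lambda>w\<in>carrier (W n). ext_hom f w) (x \<otimes>\<^bsub>W n\<^esub> y) =
     (\<lambda>w\<in>carrier (W n). ext_hom f w) x \<otimes>\<^bsub>W n\<^esub> (\<lambda>w\<in>carrier (W n). ext_hom f w) y"
    using x y xy by (simp add: W_mult)
qed

lemma hom_ext:
  assumes h: "h \<in> hom (W n) (W n)" and w: "w \<in> carrier (W n)"
  shows "h w = ext_hom (\<lambda>x. h [x]) w"
  using w
proof (induct w)
  case Nil
  have "h [] = []" using hom_one[OF h group_W group_W] by (simp add: W_one)
  then show ?case by (simp add: ext_hom_def)
next
  case (Cons x xs)
  have xs: "xs \<in> carrier (W n)" and x: "[x] \<in> carrier (W n)"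
    using Cons.prems by (auto simp: W_carrier successively_Cons)
  have "x # xs = [x] \<otimes>\<^bsub>W n\<^esub> xs" using Cons.prems by (simp add: W_mult W_carrier red_id)
  then have "h (x # xs) = h [x] \<otimes>\<^bsub>W n\<^esub> h xs" using h x xs by (simp add: hom_mult)
  also have "\<dots> = red (h [x] @ red (concat (map (\<lambda>x. h [x]) xs)))"
    using Cons xs by (simp add: W_mult ext_hom_def)
  also have "\<dots> = ext_hom (\<lambda>x. h [x]) (x # xs)"
    unfolding ext_hom_def using red_append_right[of "h [x]"] by simp
  finally show ?case .
qed



abbreviation AG where "AG n \<equiv> AutoGroup (W n)"

lemma ext_hom_cong: "(\<And>x. x \<in> set w \<Longrightarrow> f x = g x) \<Longrightarrow> ext_hom f w = ext_hom g w"
  unfolding ext_hom_def by (metis map_eq_conv)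

lemma AG_carrier: "carrier (AG n) = auto (W n)"
  by (simp add: AutoGroup_def BijGroup_def)

lemma AG_mult: "f \<in> auto (W n) \<Longrightarrow> g \<in> auto (W n) \<Longrightarrow> f \<otimes>\<^bsub>AG n\<^esub> g = compose (carrier (W n)) f g"
  by (simp add: AutoGroup_def BijGroup_def auto_def)

lemma AG_one: "\<one>\<^bsub>AG n\<^esub> = (\<lambda>x\<in>carrier (W n). x)"
  by (simp add: AutoGroup_def BijGroup_def)

lemma group_AG: "group (AG n)"
  using group.AutoGroup[OF group_W] .

lemma letter_carrier: "x \<in> {1..n} \<Longrightarrow> [x] \<in> carrier (W n)"
  by (simp add: W_carrier)

lemma AG_eqI:
  assumes "f \<in> auto (W n)" "g \<in> auto (W n)" "\<And>i. i \<in> {1..n} \<Longrightarrow> f [i] = g [i]"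
  shows "f = g"
proof
  fix w
  show "f w = g w"
  proof (cases "w \<in> carrier (W n)")
    case True
    have "f w = ext_hom (\<lambda>x. f [x]) w" using assms True by (intro hom_ext) (auto simp: auto_def)
    also have "\<dots> = ext_hom (\<lambda>x. g [x]) w"
      using True assms(3) by (intro ext_hom_cong) (auto simp: W_carrier)
    also have "\<dots> = g w" using assms True by (intro hom_ext[symmetric]) (auto simp: auto_def)
    finally show ?thesis .
  next
    case False
    then show ?thesis using assms(1,2)
      by (auto simp: auto_def Bij_def extensional_def)
  qed
qed

definition E :: "nat \<Rightarrow> (nat \<Rightarrow> nat list) \<Rightarrow> nat list \<Rightarrow> nat list" where
  "E n f = (\<lambda>w\<in>carrier (W n). ext_hom f w)"

lemma E_auto:
  assumes f: "good n f" and g: "good n g"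
    and gf: "\<And>x. x \<in> {1..n} \<Longrightarrow> ext_hom g (f x) = [x]"
    and fg: "\<And>x. x \<in> {1..n} \<Longrightarrow> ext_hom f (g x) = [x]"
  shows "E n f \<in> auto (W n)"
proof -
  have inv: "ext_hom g (ext_hom f a) = a" if a: "a \<in> carrier (W n)" and f: "good n f" and g: "good n g"
    and gf: "\<And>x. x \<in> {1..n} \<Longrightarrow> ext_hom g (f x) = [x]" for f g a
  proof -
    have "ext_hom g (ext_hom f a) = ext_hom (\<lambda>x. ext_hom g (f x)) a"
      using a f g by (intro ext_hom_comp) (auto simp: good_def W_carrier)
    also have "\<dots> = ext_hom (\<lambda>x. [x]) a"
      using a gf by (intro ext_hom_cong) (auto simp: W_carrier)
    also have "\<dots> = a" using a by (simp add: ext_hom_id W_carrier)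
    finally show ?thesis .
  qed
  have i1: "\<forall>a\<in>carrier (W n). ext_hom g (ext_hom f a) = a" using inv[OF _ f g gf] by blast
  have i2: "\<forall>a\<in>carrier (W n). ext_hom f (ext_hom g a) = a" using inv[OF _ g f fg] by blast
  have "bij_betw (E n f) (carrier (W n)) (carrier (W n))"
    by (rule bij_betw_byWitness[where f' = "E n g"])
       (auto simp: E_def ext_hom_carrier f g i1 i2)
  then show ?thesis
    using ext_hom_hom[OF f] by (simp add: auto_def Bij_def E_def)
qed

lemma E_letter: "x \<in> {1..n} \<Longrightarrow> rd (f x) \<Longrightarrow> E n f [x] = f x"
  by (simp add: E_def letter_carrier ext_hom_letter red_id)

lemma alpha_E: "alpha n p = E n (\<lambda>x. [p x])" by (simp add: alpha_def E_def)

lemma alpha_auto: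
  assumes "p permutes {1..n}"
  shows "alpha n p \<in> auto (W n)"
  unfolding alpha_E
proof (rule E_auto[where g = "\<lambda>x. [Hilbert_Choice.inv p x]"])
  have "\<forall>x\<in>{1..n}. p x \<in> {1..n}" using permutes_in_image[OF assms] by blast
  then show "good n (\<lambda>x. [p x])"
    by (auto simp: good_def red_Cons stp_def)
  have "\<forall>x\<in>{1..n}. Hilbert_Choice.inv p x \<in> {1..n}" using permutes_in_image[OF permutes_inv[OF assms]] by blast
  then show "good n (\<lambda>x. [Hilbert_Choice.inv p x])"
    by (auto simp: good_def red_Cons stp_def)
qed (auto simp: ext_hom_letter red_Cons stp_def permutes_inverses[OF assms])

lemma alpha_letter: "x \<in> {1..n} \<Longrightarrow> alpha n p [x] = [p x]"
  by (simp add: alpha_E E_letter)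

lemma alpha_comp:
  assumes p: "p permutes {1..n}" and q: "q permutes {1..n}"
  shows "alpha n (p \<circ> q) = alpha n p \<otimes>\<^bsub>AG n\<^esub> alpha n q"
proof -
  have a: "alpha n p \<otimes>\<^bsub>AG n\<^esub> alpha n q \<in> auto (W n)"
    using alpha_auto[OF p] alpha_auto[OF q] monoid.m_closed[OF group.is_monoid[OF group_AG]]
    by (metis AG_carrier)
  show ?thesis
  proof (rule AG_eqI[OF alpha_auto[OF permutes_compose[OF q p]] a])
    fix i assume i: "i \<in> {1..n}"
    have qi: "q i \<in> {1..n}" using i permutes_in_image[OF q] by simp
    show "alpha n (p \<circ> q) [i] = (alpha n p \<otimes>\<^bsub>AG n\<^esub> alpha n q) [i]"
      using i qi by (simp add: AG_mult[OF alpha_auto[OF p] alpha_auto[OF q]] compose_def letter_carrier alpha_letter)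
  qed
qed

lemma alpha_id: "alpha n id = \<one>\<^bsub>AG n\<^esub>"
proof (rule AG_eqI[OF alpha_auto[OF permutes_id]])
  show "\<one>\<^bsub>AG n\<^esub> \<in> auto (W n)" using group.id_in_auto[OF group_W] by (simp add: AG_one)
  fix i assume "i \<in> {1..n}"
  then show "alpha n id [i] = \<one>\<^bsub>AG n\<^esub> [i]" by (simp add: alpha_letter AG_one letter_carrier)
qed

lemma sigma_E: "sigma n i j = E n (\<lambda>x. if x = j then [i, j, i] else [x])"
  by (simp add: sigma_def E_def)

lemma sigma_auto:
  assumes "i \<in> {1..n}" "j \<in> {1..n}" "i \<noteq> j"
  shows "sigma n i j \<in> auto (W n)"
  unfolding sigma_E
  by (rule E_auto[where g = "\<lambda>x. if x = j then [i, j, i] else [x]"])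
     (use assms in \<open>auto simp: good_def red_Cons stp_def ext_hom_def\<close>)

lemma sigma_letter: "i \<noteq> j \<Longrightarrow> x \<in> {1..n} \<Longrightarrow> sigma n i j [x] = (if x = j then [i, j, i] else [x])"
  by (simp add: sigma_E E_letter)

lemma conj_sigma:
  assumes p: "p permutes {1..n}" and ij: "i \<in> {1..n}" "j \<in> {1..n}" "i \<noteq> j"
  shows "alpha n p \<otimes>\<^bsub>AG n\<^esub> sigma n i j = sigma n (p i) (p j) \<otimes>\<^bsub>AG n\<^esub> alpha n p"
proof -
  have pi: "p i \<in> {1..n}" "p j \<in> {1..n}" "p i \<noteq> p j"
    using ij permutes_in_image[OF p] permutes_inj[OF p] by (auto simp: inj_eq)
  have au: "alpha n p \<in> auto (W n)" "sigma n i j \<in> auto (W n)" "sigma n (p i) (p j) \<in> auto (W n)"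
    using alpha_auto[OF p] sigma_auto[OF ij] sigma_auto[OF pi] by auto
  have m: "a \<otimes>\<^bsub>AG n\<^esub> b \<in> auto (W n)" if "a \<in> auto (W n)" "b \<in> auto (W n)" for a b
    using that monoid.m_closed[OF group.is_monoid[OF group_AG]] by (metis AG_carrier)
  show ?thesis
  proof (rule AG_eqI[OF m m])
    fix x assume x: "x \<in> {1..n}"
    have px: "p x \<in> {1..n}" using x permutes_in_image[OF p] by simp
    have c3: "[i, j, i] \<in> carrier (W n)" using ij by (simp add: W_carrier)
    have e: "alpha n p [i, j, i] = [p i, p j, p i]"
      using c3 pi by (simp add: alpha_def ext_hom_def red_Cons stp_def)
    have "(p x = p j) = (x = j)" using permutes_inj[OF p] by (auto simp: inj_eq)
    then show "(alpha n p \<otimes>\<^bsub>AG n\<^esub> sigma n i j) [x] = (sigma n (p i) (p j) \<otimes>\<^bsub>AG n\<^esub> alpha n p) [x]"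
      using x px ij pi au e
      by (simp add: AG_mult compose_def letter_carrier sigma_letter alpha_letter c3)
  qed (use au in auto)
qed



definition Y :: "nat \<Rightarrow> nat \<Rightarrow> nat \<Rightarrow> (nat list \<Rightarrow> nat list) set" where
  "Y n k l = insert (sigma n k l) ((\<lambda>i. alpha n (transpose i (i + 1))) ` {1..n - 1})"

locale WS =
  fixes n k l :: nat
  assumes n: "2 \<le> n" and k: "k \<in> {1..n}" and l: "l \<in> {1..n}" and kl: "k \<noteq> l"
begin

abbreviation "H \<equiv> generate (AG n) (Y n k l)"

lemma Y_sub: "Y n k l \<subseteq> carrier (AG n)"
proof -
  have "alpha n (transpose i (i + 1)) \<in> auto (W n)" if "i \<in> {1..n-1}" for i
    using that by (intro alpha_auto permutes_swap_id) auto
  then show ?thesis using sigma_auto[OF k l kl] by (auto simp: Y_def AG_carrier)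
qed

lemma H_sub: "subgroup H (AG n)"
  using group.generate_is_subgroup[OF group_AG Y_sub] .

lemma H_mult: "a \<in> H \<Longrightarrow> b \<in> H \<Longrightarrow> a \<otimes>\<^bsub>AG n\<^esub> b \<in> H"
  using subgroup.m_closed[OF H_sub] by blast

lemma H_inv: "a \<in> H \<Longrightarrow> inv\<^bsub>AG n\<^esub> a \<in> H"
  using subgroup.m_inv_closed[OF H_sub] by blast

lemma H_one: "\<one>\<^bsub>AG n\<^esub> \<in> H"
  using subgroup.one_closed[OF H_sub] by blast

lemma transp_H_aux: "a \<in> {1..n} \<Longrightarrow> a + d \<in> {1..n} \<Longrightarrow> 1 \<le> d \<Longrightarrow> alpha n (transpose a (a + d)) \<in> H"
proof (induct d arbitrary: a)
  case 0 then show ?case by simp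
next
  case (Suc d)
  show ?case
  proof (cases "d = 0")
    case True
    then have "alpha n (transpose a (a + Suc d)) \<in> Y n k l" using Suc.prems by (auto simp: Y_def)
    then show ?thesis by (rule generate.incl)
  next
    case False
    have p1: "transpose a (a + 1) permutes {1..n}" "transpose (a + 1) (a + 1 + d) permutes {1..n}"
      using Suc.prems by (auto intro!: permutes_swap_id)
    have e: "transpose a (a + Suc d) = transpose a (a + 1) \<circ> transpose (a + 1) (a + 1 + d) \<circ> transpose a (a + 1)"
      using False transpose_comp_triple[of a "a + 1 + d" "a + 1"] by simp
    have h1: "alpha n (transpose a (a + 1)) \<in> H"
      using Suc.prems by (intro generate.incl) (auto simp: Y_def)
    have h2: "alpha n (transpose (a + 1) (a + 1 + d)) \<in> H"
      using Suc.prems False by (intro Suc.hyps) auto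
    have "alpha n (transpose a (a + 1) \<circ> transpose (a + 1) (a + 1 + d) \<circ> transpose a (a + 1))
       = alpha n (transpose a (a + 1) \<circ> transpose (a + 1) (a + 1 + d)) \<otimes>\<^bsub>AG n\<^esub> alpha n (transpose a (a + 1))"
      by (rule alpha_comp[OF permutes_compose[OF p1(2) p1(1)] p1(1)])
    also have "alpha n (transpose a (a + 1) \<circ> transpose (a + 1) (a + 1 + d))
       = alpha n (transpose a (a + 1)) \<otimes>\<^bsub>AG n\<^esub> alpha n (transpose (a + 1) (a + 1 + d))"
      by (rule alpha_comp[OF p1(1) p1(2)])
    finally show ?thesis unfolding e using h1 h2 by (simp add: H_mult)
  qed
qed

lemma transp_H: "a \<in> {1..n} \<Longrightarrow> b \<in> {1..n} \<Longrightarrow> alpha n (transpose a b) \<in> H"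
proof -
  assume a: "a \<in> {1..n}" and b: "b \<in> {1..n}"
  consider "a = b" | "a < b" | "b < a" by linarith
  then show ?thesis
  proof cases
    case 1 then show ?thesis using H_one alpha_id by simp
  next
    case 2 then show ?thesis using transp_H_aux[OF a, of "b - a"] b by simp
  next
    case 3 then show ?thesis using transp_H_aux[OF b, of "a - b"] a by (simp add: transpose_commute)
  qed
qed

lemma perm_H: assumes "p permutes {1..n}" shows "alpha n p \<in> H"
  using assms finite_atLeastAtMost[of 1 n]
proof (induct p rule: permutes_induct)
  case id then show ?case using H_one alpha_id[of n] by (simp only:)
next
  case (swap a b p)
  then show ?case unfolding alpha_comp[OF permutes_swap_id[OF swap(1,2)] swap(5)]
    using transp_H[OF swap(1,2)] by (simp add: H_mult)
qed

lemma sigma_H: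
  assumes i: "i \<in> {1..n}" and j: "j \<in> {1..n}" and ij: "i \<noteq> j"
  shows "sigma n i j \<in> H"
proof -
  define l' where "l' = transpose k i l"
  define p where "p = transpose l' j \<circ> transpose k i"
  have l'n: "l' \<in> {1..n}" using k l i by (auto simp: l'_def transpose_def)
  have il': "i \<noteq> l'" using kl by (auto simp: l'_def transpose_def)
  have pp: "p permutes {1..n}" unfolding p_def
    by (intro permutes_compose permutes_swap_id) (use k i l'n j in auto)
  have pk: "p k = i" using il' ij by (simp add: p_def transpose_def)
  have pl: "p l = j" by (simp add: p_def l'_def)
  have G: "group (AG n)" by (rule group_AG)
  have au: "alpha n p \<in> carrier (AG n)" "sigma n k l \<in> carrier (AG n)" "sigma n i j \<in> carrier (AG n)"
    using alpha_auto[OF pp] sigma_auto[OF k l kl] sigma_auto[OF i j ij] by (auto simp: AG_carrier)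
  have c: "alpha n p \<otimes>\<^bsub>AG n\<^esub> sigma n k l = sigma n i j \<otimes>\<^bsub>AG n\<^esub> alpha n p"
    using conj_sigma[OF pp k l kl] pk pl by simp
  have b: "alpha n p \<otimes>\<^bsub>AG n\<^esub> sigma n k l \<in> carrier (AG n)"
    using au monoid.m_closed[OF group.is_monoid[OF G]] by blast
  have "sigma n i j = alpha n p \<otimes>\<^bsub>AG n\<^esub> sigma n k l \<otimes>\<^bsub>AG n\<^esub> inv\<^bsub>AG n\<^esub> alpha n p"
    using c au b by (simp add: group.inv_solve_right[OF G])
  moreover have "sigma n k l \<in> H" by (intro generate.incl) (simp add: Y_def)
  ultimately show ?thesis using perm_H[OF pp] by (simp add: H_mult H_inv)
qed

end


definition pfx :: "nat list \<Rightarrow> nat list \<Rightarrow> bool" where "pfx p v \<longleftrightarrow> (\<exists>r. v = p @ r)"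

lemma pfx_comparable: "pfx p v \<Longrightarrow> pfx q v \<Longrightarrow> length p \<le> length q \<Longrightarrow> pfx p q"
proof -
  assume "pfx p v" "pfx q v" and len: "length p \<le> length q"
  then obtain r s where "p @ r = q @ s" by (auto simp: pfx_def)
  then obtain us where "p = q @ us \<and> us @ r = s \<or> p @ us = q \<and> r = us @ s"
    by (auto simp: append_eq_append_conv2)
  then show "pfx p q"
  proof
    assume "p = q @ us \<and> us @ r = s"
    then have "us = []" using len by auto
    then show ?thesis using \<open>p = q @ us \<and> us @ r = s\<close> by (auto simp: pfx_def)
  next
    assume "p @ us = q \<and> r = us @ s"
    then show ?thesis by (auto simp: pfx_def)
  qed
qed

lemma pfx_same_len: "pfx p v \<Longrightarrow> pfx q v \<Longrightarrow> length p = length q \<Longrightarrow> p = q"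
  using pfx_comparable[of p v q] by (auto simp: pfx_def)

lemma pal_form:
  "rd u \<Longrightarrow> u \<noteq> [] \<Longrightarrow> u = rev u \<Longrightarrow> \<exists>w a. u = w @ [a] @ rev w"
proof (induct "length u" arbitrary: u rule: less_induct)
  case less
  show ?case
  proof (cases "length u = 1")
    case True
    then obtain a where "u = [a]" by (cases u) auto
    then show ?thesis by (intro exI[of _ "[]"] exI[of _ a]) simp
  next
    case False
    obtain x t where xt: "u = x # t" using less.prems(2) by (cases u) auto
    then have "t \<noteq> []" using False by auto
    then obtain m y where "t = m @ [y]" by (cases t rule: rev_exhaust) auto
    then have u: "u = x # m @ [y]" using xt by simp
    have r: "rev u = y # rev m @ [x]" using u by simp
    have e: "x # m @ [y] = y # rev m @ [x]"
      by (subst u[symmetric], subst r[symmetric]) (rule less.prems(3))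
    then have e2: "x = y \<and> m @ [y] = rev m @ [x]" by (simp only: list.inject)
    then have "x = y" by blast
    from e2 have "m @ [y] = rev m @ [y]" by blast
    then have "m = rev m" by (simp only: append_same_eq)
    show ?thesis
    proof (cases "m = []")
      case True
      then show ?thesis using less.prems(1) u \<open>x = y\<close> by simp
    next
      case False
      have "rd m" using less.prems(1) u by (simp add: successively_append_iff successively_Cons)
      have lm: "length m < length u" using u by simp
      obtain w a where "m = w @ [a] @ rev w" using less.hyps[OF lm \<open>rd m\<close> False \<open>m = rev m\<close>] by blast
      then show ?thesis using u \<open>x = y\<close> by (intro exI[of _ "x # w"] exI[of _ a]) simp
    qed
  qed
qed

lemma invol_form:
  assumes "rd u" "u \<noteq> []" "red (u @ u) = []"
  shows "\<exists>w a. u = w @ [a] @ rev w"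
  using red_inv_unique[OF assms(1) assms(1) assms(3)] pal_form assms by auto

lemma refl_lemma:
  assumes "rd (w @ [a] @ rev w)" "rd v" "\<not> pfx (w @ [a]) v"
  shows "pfx (w @ [a]) (red ((w @ [a] @ rev w) @ v))"
  using assms
proof (induct w arbitrary: v)
  case Nil
  show ?case
  proof (cases v)
    case Nil then show ?thesis by (simp add: pfx_def red_Cons stp_def)
  next
    case (Cons y ys)
    then have "y \<noteq> a" using Nil.prems(3) by (auto simp: pfx_def)
    then have "rd (a # v)" using Nil.prems Cons by (simp add: successively_Cons)
    then show ?thesis by (simp add: pfx_def red_id)
  qed
next
  case (Cons b w')
  define u' where "u' = w' @ [a] @ rev w'"
  have rdu: "rd (b # u' @ [b])" using Cons.prems(1) by (simp add: u'_def)
  have rdu': "rd u'" using rdu by (simp add: successively_append_iff successively_Cons)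
  show ?case
  proof (cases "\<exists>v'. v = b # v'")
    case True
    then obtain v' where v: "v = b # v'" by blast
    have np: "\<not> pfx (w' @ [a]) v'" using Cons.prems(3) v by (auto simp: pfx_def)
    have rv': "rd v'" using Cons.prems(2) v by (cases v') auto
    have ih: "pfx (w' @ [a]) (red (u' @ v'))" using Cons.hyps[OF _ rv' np] rdu' by (simp add: u'_def)
    then obtain r where r: "red (u' @ v') = w' @ [a] @ r" by (auto simp: pfx_def)
    have hb: "hd (w' @ [a]) \<noteq> b" using rdu by (cases w') (auto simp: u'_def successively_Cons)
    have "red ((b # w') @ [a] @ rev (b # w') @ v) = red ((b # u') @ [b, b] @ v')"
      by (simp add: v u'_def)
    also have "\<dots> = red (b # u' @ v')" using red_cancel1[of "b # u'" b v'] by simp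
    also have "\<dots> = stp b (w' @ [a] @ r)" by (simp add: red_Cons r)
    also have "\<dots> = b # w' @ [a] @ r" using hb by (cases w') (auto simp: stp_def)
    finally show ?thesis by (simp add: pfx_def)
  next
    case False
    have "rd ((b # u' @ [b]) @ v)" using rdu Cons.prems(2) False
      unfolding successively_append_iff[of _ "b # u' @ [b]" v] by (cases v) auto
    then have "red ((b # u' @ [b]) @ v) = (b # u' @ [b]) @ v" by (rule red_id)
    then show ?thesis by (simp add: u'_def pfx_def)
  qed
qed



locale PP =
  fixes n :: nat and u w :: "nat \<Rightarrow> nat list" and a :: "nat \<Rightarrow> nat"
  assumes form: "j \<in> {1..n} \<Longrightarrow> u j = w j @ [a j] @ rev (w j)"
    and carr: "j \<in> {1..n} \<Longrightarrow> u j \<in> carrier (W n)"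
    and injU: "inj_on u {1..n}"
begin

lemma rdu: "j \<in> {1..n} \<Longrightarrow> rd (u j)" using carr by (simp add: W_carrier)
lemma setu: "j \<in> {1..n} \<Longrightarrow> set (u j) \<subseteq> {1..n}" using carr by (simp add: W_carrier)
lemma uu: "j \<in> {1..n} \<Longrightarrow> red (u j @ u j) = []"
proof -
  assume j: "j \<in> {1..n}"
  then have "rev (u j) = u j" using form by simp
  then show ?thesis using red_rev[of "u j"] by simp
qed

definition NP where "NP \<longleftrightarrow> (\<forall>k\<in>{1..n}. \<forall>i\<in>{1..n}. k \<noteq> i \<longrightarrow> \<not> pfx (w k @ [a k]) (w i))"

lemma dsj_aux:
  assumes np: NP and j: "j \<in> {1..n}" "j' \<in> {1..n}" "j \<noteq> j'"
    and p: "pfx (w j @ [a j]) v" "pfx (w j' @ [a j']) v" and len: "length (w j) \<le> length (w j')"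
  shows False
proof (cases "length (w j) = length (w j')")
  case True
  have "w j @ [a j] = w j' @ [a j']" using pfx_same_len[OF p] True by simp
  then have "u j = u j'" using form j by simp
  then show False using injU j by (auto dest: inj_onD)
next
  case False
  have "pfx (w j') v" using p(2) by (auto simp: pfx_def)
  then have "pfx (w j @ [a j]) (w j')" using pfx_comparable[OF p(1)] len False by simp
  then show False using np j by (auto simp: NP_def)
qed

lemma dsj:
  assumes np: NP and j: "j \<in> {1..n}" "j' \<in> {1..n}" "j \<noteq> j'"
    and p: "pfx (w j @ [a j]) v" "pfx (w j' @ [a j']) v"
  shows False
proof (cases "length (w j) \<le> length (w j')")
  case True then show ?thesis using dsj_aux[OF np j p] by simp
next
  case False then show ?thesis using dsj_aux[OF np j(2,1) _ p(2,1)] j(3) by simp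
qed

lemma refl_u: "j \<in> {1..n} \<Longrightarrow> rd v \<Longrightarrow> \<not> pfx (w j @ [a j]) v \<Longrightarrow> pfx (w j @ [a j]) (red (u j @ v))"
  using refl_lemma[of "w j" "a j" v] form rdu by simp

lemma pp:
  assumes np: NP
  shows "is \<noteq> [] \<Longrightarrow> set is \<subseteq> {1..n} \<Longrightarrow> successively (\<noteq>) is \<Longrightarrow> v \<in> carrier (W n) \<Longrightarrow>
    \<not> pfx (w (last is) @ [a (last is)]) v \<Longrightarrow> pfx (w (hd is) @ [a (hd is)]) (red (concat (map u is) @ v))"
proof (induct "is")
  case Nil then show ?case by simp
next
  case (Cons j rest)
  have j: "j \<in> {1..n}" using Cons.prems by simp
  have rv: "rd v" using Cons.prems by (simp add: W_carrier)
  show ?case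
  proof (cases "rest = []")
    case True
    then show ?thesis using refl_u[OF j rv] Cons.prems by simp
  next
    case False
    define v' where "v' = red (concat (map u rest) @ v)"
    have ih: "pfx (w (hd rest) @ [a (hd rest)]) v'"
      unfolding v'_def using Cons False by (simp add: successively_Cons)
    have "hd rest \<in> set rest" by (rule hd_in_set[OF False])
    then have hr1: "hd rest \<in> {1..n}" using Cons.prems(2) by auto
    have hr: "hd rest \<in> {1..n}" "hd rest \<noteq> j" using hr1 Cons.prems(3) False
      by (auto simp: successively_Cons)
    have "\<not> pfx (w j @ [a j]) v'" using dsj[OF np j hr(1) hr(2)[symmetric] _ ih] by blast
    moreover have "rd v'" unfolding v'_def by (rule red_rd)
    ultimately have "pfx (w j @ [a j]) (red (u j @ v'))" using refl_u[OF j] by simp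
    moreover have "red (u j @ v') = red (concat (map u (j # rest)) @ v)"
      unfolding v'_def using red_append_right[of "u j" "concat (map u rest) @ v"] by simp
    ultimately show ?thesis by simp
  qed
qed

lemma normalize:
  "set is \<subseteq> {1..n} \<Longrightarrow> \<exists>is'. set is' \<subseteq> {1..n} \<and> successively (\<noteq>) is' \<and>
      red (concat (map u is)) = red (concat (map u is'))"
proof (induct "is")
  case Nil then show ?case by (intro exI[of _ "[]"]) simp
next
  case (Cons j rest)
  then obtain r where r: "set r \<subseteq> {1..n}" "successively (\<noteq>) r"
    "red (concat (map u rest)) = red (concat (map u r))" by auto
  have j: "j \<in> {1..n}" using Cons.prems by simp
  have e: "red (concat (map u (j # rest))) = red (u j @ concat (map u r))"
    using red_append_right[of "u j" "concat (map u rest)"] red_append_right[of "u j" "concat (map u r)"] r(3)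
    by simp
  show ?case
  proof (cases "r \<noteq> [] \<and> hd r = j")
    case True
    then obtain r' where r': "r = j # r'" by (cases r) auto
    have "red (u j @ concat (map u r)) = red (red (u j @ u j) @ concat (map u r'))"
      using red_append_left[of "u j @ u j" "concat (map u r')"] r' by simp
    also have "\<dots> = red (concat (map u r'))" using uu[OF j] by simp
    finally show ?thesis using e r r' by (intro exI[of _ r']) (auto simp: successively_Cons)
  next
    case False
    then show ?thesis using e r j
      by (intro exI[of _ "j # r"]) (auto simp: successively_Cons)
  qed
qed

lemma pingpong:
  assumes i: "i \<in> {1..n}" and wi: "w i \<noteq> []"
    and surj: "\<And>x. x \<in> {1..n} \<Longrightarrow> \<exists>is. set is \<subseteq> {1..n} \<and> [x] = red (concat (map u is))"
  shows "\<exists>k\<in>{1..n}. \<exists>i\<in>{1..n}. k \<noteq> i \<and> pfx (w k @ [a k]) (w i)"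
proof (rule ccontr)
  assume "\<not> ?thesis"
  then have np: NP unfolding NP_def by blast
  obtain c ws where wc: "w i = c # ws" using wi by (cases "w i") auto
  have "c \<in> set (u i)" using form[OF i] wc by simp
  then have c: "c \<in> {1..n}" using setu[OF i] by blast
  obtain is0 where is0: "set is0 \<subseteq> {1..n}" "[c] = red (concat (map u is0))" using surj[OF c] by blast
  obtain is' where is': "set is' \<subseteq> {1..n}" "successively (\<noteq>) is'" "[c] = red (concat (map u is'))"
    using normalize[OF is0(1)] is0(2) by auto
  have ne: "is' \<noteq> []" using is'(3) by auto
  have "pfx (w (hd is') @ [a (hd is')]) (red (concat (map u is') @ []))"
    using pp[OF np ne is'(1,2), of "[]"] by (simp add: W_carrier pfx_def)
  then have "pfx (w (hd is') @ [a (hd is')]) [c]" using is'(3) by simp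
  then have h: "w (hd is') = []" "a (hd is') = c" by (auto simp: pfx_def Cons_eq_append_conv)
  have "hd is' \<in> set is'" by (rule hd_in_set[OF ne])
  then have "hd is' \<in> {1..n}" using is'(1) by blast
  moreover have "hd is' \<noteq> i" using h wi by auto
  moreover have "pfx (w (hd is') @ [a (hd is')]) (w i)" using h wc by (simp add: pfx_def)
  ultimately show False using np i by (auto simp: NP_def)
qed

lemma shorten:
  assumes k: "k \<in> {1..n}" and i: "i \<in> {1..n}" and p: "pfx (w k @ [a k]) (w i)"
  shows "length (red (u k @ u i @ u k)) < length (u i)"
proof -
  obtain z where z: "w i = w k @ [a k] @ z" using p by (auto simp: pfx_def)
  define A where "A = w k" define b where "b = a k" define c where "c = a i"
  have uk: "u k = A @ [b] @ rev A" using form[OF k] by (simp add: A_def b_def)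
  have ui: "u i = A @ [b] @ z @ [c] @ rev z @ [b] @ rev A" using form[OF i] z by (simp add: A_def b_def c_def)
  have "u k @ u i @ u k = (A @ [b]) @ rev A @ A @ ([b] @ z @ [c] @ rev z @ [b] @ rev A @ A @ [b] @ rev A)"
    using uk ui by simp
  then have "red (u k @ u i @ u k) = red ((A @ [b]) @ [b] @ z @ [c] @ rev z @ [b] @ rev A @ A @ [b] @ rev A)"
    using red_cancel[of "A @ [b]" A "[b] @ z @ [c] @ rev z @ [b] @ rev A @ A @ [b] @ rev A"] by simp
  also have "\<dots> = red (A @ z @ [c] @ rev z @ [b] @ rev A @ A @ [b] @ rev A)"
    using red_cancel1[of A b "z @ [c] @ rev z @ [b] @ rev A @ A @ [b] @ rev A"] by simp
  also have "\<dots> = red ((A @ z @ [c] @ rev z @ [b]) @ rev A @ A @ [b] @ rev A)" by simp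
  also have "\<dots> = red ((A @ z @ [c] @ rev z @ [b]) @ [b] @ rev A)" by (rule red_cancel)
  also have "\<dots> = red ((A @ z @ [c] @ rev z) @ [b, b] @ rev A)" by simp
  also have "\<dots> = red ((A @ z @ [c] @ rev z) @ rev A)" by (rule red_cancel1)
  finally have "length (red (u k @ u i @ u k)) \<le> length ((A @ z @ [c] @ rev z) @ rev A)"
    using length_red by metis
  then show ?thesis using ui by simp
qed

end


context WS
begin

definition M :: "(nat list \<Rightarrow> nat list) \<Rightarrow> nat" where
  "M f = (\<Sum>i\<in>{1..n}. length (f [i]))"

lemma auto_facts:
  assumes f: "f \<in> auto (W n)"
  shows "f \<in> hom (W n) (W n)" "bij_betw f (carrier (W n)) (carrier (W n))" "f [] = []"
proof -
  show h: "f \<in> hom (W n) (W n)" using f by (simp add: auto_def)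
  show "bij_betw f (carrier (W n)) (carrier (W n))" using f by (simp add: auto_def Bij_def)
  show "f [] = []" using hom_one[OF h group_W group_W] by (simp add: W_one)
qed

lemma all_in_H: "f \<in> auto (W n) \<Longrightarrow> f \<in> H"
proof (induct "M f" arbitrary: f rule: less_induct)
  case less
  note f = less.prems
  note ff = auto_facts[OF f]
  define u where "u = (\<lambda>i. f [i])"
  have uC: "u i \<in> carrier (W n)" if "i \<in> {1..n}" for i
    using that ff(2) letter_carrier[of i n] by (auto simp: u_def bij_betw_def)
  have injf: "inj_on f (carrier (W n))" using ff(2) by (simp add: bij_betw_def)
  have une: "u i \<noteq> []" if "i \<in> {1..n}" for i
  proof
    assume "u i = []"
    then have "f [i] = f []" using ff(3) by (simp add: u_def)
    moreover have "[] \<in> carrier (W n)" by (simp add: W_carrier)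
    ultimately have "[i] = []" using inj_onD[OF injf] letter_carrier[OF that] by blast
    then show False by simp
  qed
  have uu: "red (u i @ u i) = []" if i: "i \<in> {1..n}" for i
  proof -
    have "f ([i] \<otimes>\<^bsub>W n\<^esub> [i]) = f [i] \<otimes>\<^bsub>W n\<^esub> f [i]"
      using ff(1) letter_carrier[OF i] by (simp add: hom_mult)
    moreover have "[i] \<otimes>\<^bsub>W n\<^esub> [i] = []" by (simp add: W_mult red_Cons stp_def)
    ultimately show ?thesis using ff(3) by (simp add: u_def W_mult)
  qed
  have "\<forall>i\<in>{1..n}. \<exists>w a. u i = w @ [a] @ rev w"
    using invol_form uu une uC by (auto simp: W_carrier)
  then obtain w a where form: "\<forall>i\<in>{1..n}. u i = w i @ [a i] @ rev (w i)" by metis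
  have injU: "inj_on u {1..n}"
  proof (rule inj_onI)
    fix x y assume "x \<in> {1..n}" "y \<in> {1..n}" "u x = u y"
    then show "x = y" using inj_onD[OF injf, of "[x]" "[y]"] letter_carrier[of _ n] by (auto simp: u_def)
  qed
  interpret P: PP n u w a using form uC injU by unfold_locales auto
  have fext: "f v = red (concat (map u v))" if "v \<in> carrier (W n)" for v
    using hom_ext[OF ff(1) that] by (simp add: ext_hom_def u_def)
  have surj: "\<exists>is. set is \<subseteq> {1..n} \<and> [x] = red (concat (map u is))" if x: "x \<in> {1..n}" for x
  proof -
    have "[x] \<in> f ` carrier (W n)" using ff(2) letter_carrier[OF x] by (simp add: bij_betw_def)
    then obtain v where v: "v \<in> carrier (W n)" "[x] = f v" by blast
    then show ?thesis using fext[OF v(1)] by (intro exI[of _ v]) (auto simp: W_carrier)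
  qed
  show ?case
  proof (cases "\<exists>i\<in>{1..n}. w i \<noteq> []")
    case True
    then obtain i0 where i0: "i0 \<in> {1..n}" "w i0 \<noteq> []" by blast
    obtain kk i where ki: "kk \<in> {1..n}" "i \<in> {1..n}" "kk \<noteq> i" "pfx (w kk @ [a kk]) (w i)"
      using P.pingpong[OF i0 surj] by blast
    define s where "s = sigma n kk i"
    have sA: "s \<in> auto (W n)" using sigma_auto[OF ki(1,2,3)] by (simp add: s_def)
    have G: "group (AG n)" by (rule group_AG)
    have mc: "x \<otimes>\<^bsub>AG n\<^esub> y \<in> auto (W n)" if "x \<in> auto (W n)" "y \<in> auto (W n)" for x y
      using that monoid.m_closed[OF group.is_monoid[OF G]] by (metis AG_carrier)
    define g where "g = f \<otimes>\<^bsub>AG n\<^esub> s"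
    have gA: "g \<in> auto (W n)" using mc[OF f sA] by (simp add: g_def)
    have gval: "g [j] = (if j = i then red (u kk @ u i @ u kk) else u j)" if j: "j \<in> {1..n}" for j
    proof -
      have "g [j] = f (s [j])" using j by (simp add: g_def AG_mult[OF f sA] compose_def letter_carrier)
      also have "\<dots> = (if j = i then f [kk, i, kk] else u j)"
        using j ki by (simp add: s_def sigma_letter u_def)
      also have "f [kk, i, kk] = red (u kk @ u i @ u kk)"
        using fext[of "[kk, i, kk]"] ki by (simp add: W_carrier)
      finally show ?thesis .
    qed
    have "M g < M f"
    proof -
      have "M g = (\<Sum>j\<in>{1..n}. length (if j = i then red (u kk @ u i @ u kk) else u j))"
        unfolding M_def by (rule sum.cong) (auto simp: gval)
      also have "\<dots> < (\<Sum>j\<in>{1..n}. length (u j))"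
      proof (rule sum_strict_mono_ex1)
        show "\<forall>x\<in>{1..n}. length (if x = i then red (u kk @ u i @ u kk) else u x) \<le> length (u x)"
          using P.shorten[OF ki(1,2,4)] by auto
        show "\<exists>a\<in>{1..n}. length (if a = i then red (u kk @ u i @ u kk) else u a) < length (u a)"
          using P.shorten[OF ki(1,2,4)] ki(2) by (intro bexI[of _ i]) auto
      qed simp
      also have "\<dots> = M f" by (simp add: M_def u_def)
      finally show ?thesis .
    qed
    then have gH: "g \<in> H" using less.hyps gA by blast
    have sH: "s \<in> H" using sigma_H[OF ki(1,2,3)] by (simp add: s_def)
    have "f = g \<otimes>\<^bsub>AG n\<^esub> inv\<^bsub>AG n\<^esub> s"
      using f sA gA by (simp add: g_def AG_carrier[symmetric] group.inv_solve_right[OF G])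
    then show ?thesis using gH sH by (simp add: H_mult H_inv)
  next
    case False
    then have ua: "u i = [a i]" if "i \<in> {1..n}" for i using form that by auto
    have ain: "a i \<in> {1..n}" if "i \<in> {1..n}" for i using P.setu[OF that] ua[OF that] by simp
    define p where "p = (\<lambda>x. if x \<in> {1..n} then a x else x)"
    have injp: "inj_on p {1..n}"
    proof (rule inj_onI)
      fix x y assume "x \<in> {1..n}" "y \<in> {1..n}" "p x = p y"
      then have "u x = u y" using ua by (simp add: p_def)
      then show "x = y" using inj_onD[OF injU] \<open>x \<in> {1..n}\<close> \<open>y \<in> {1..n}\<close> by blast
    qed
    have "p ` {1..n} \<subseteq> {1..n}" using ain by (auto simp: p_def)
    then have "p ` {1..n} = {1..n}" using endo_inj_surj[OF finite_atLeastAtMost _ injp] by blast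
    then have pp: "p permutes {1..n}"
      using injp by (intro bij_imp_permutes) (auto simp: bij_betw_def p_def)
    have "f = alpha n p"
    proof (rule AG_eqI[OF f alpha_auto[OF pp]])
      fix i assume i: "i \<in> {1..n}"
      show "f [i] = alpha n p [i]" using ua[OF i] i by (simp add: alpha_letter p_def u_def)
    qed
    then show ?thesis using perm_H[OF pp] by simp
  qed
qed

lemma main: "generate (AG n) (Y n k l) = carrier (AG n)"
proof
  show "generate (AG n) (Y n k l) \<subseteq> carrier (AG n)"
    using group.generate_incl[OF group_AG Y_sub] .
  show "carrier (AG n) \<subseteq> generate (AG n) (Y n k l)"
    using all_in_H by (auto simp: AG_carrier)
qed

end

theorem proposition2p1:
  fixes n k l :: nat
  assumes "2 \<le> n" and "k \<in> {1..n}" and "l \<in> {1..n}" and "k \<noteq> l"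
  shows "generate (AutoGroup (W n))
           (insert (sigma n k l) ((\<lambda>i. alpha n (transpose i (i + 1))) ` {1..n - 1}))
         = carrier (AutoGroup (W n))"
proof -
  interpret WS n k l using assms by unfold_locales
  show ?thesis using main by (simp add: Y_def)
qed


end
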